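(* Let $k\geqslant 1$ and let $\pi_1, \ldots, \pi_k \geqslant 3$ be pairwise relatively prime integers, with $\pi_1=3$. Then the NFA $A_{\pi_1, \ldots, \pi_k}$ and the regular expression $\alpha_{\pi_1, \ldots, \pi_k}$ define the same language.
   Context: Over the alphabet $\{a,b\}$, for an integer $\pi\geqslant 3$ let $\beta_\pi=(a((b\mid\epsilon)a)^{\pi-2}a)^*$, where $(b\mid\epsilon)$ denotes the language $\{b,\epsilon\}$ and $x^{m}$ denotes $m$-fold concatenation; and let $\alpha_{\pi_1,\ldots,\pi_k}=\big(a(\beta_{\pi_1}\mid\cdots\mid\beta_{\pi_k})b\big)^*$. The NFA $A_{\pi_1,\ldots,\pi_k}=(\{a,b\},Q,\{\widehat q\},\delta,\{\widehat q\})$ has states $Q=\{\widehat{q}\} \cup \bigcup_{i=1}^k \{q_{i,0}, \ldots, q_{i,\pi_i-1}\} \cup \bigcup_{i=1}^k \{r_{i,1}, \ldots, r_{i,\pi_i-2}\}$, unique initial state $\widehat q$, unique accepting state $\widehat q$, and exactly the following transitions: $\delta(\widehat{q}, a) = \{q_{1,0}, \ldots, q_{k,0}\}$; $\delta(q_{i,j},a) = \{q_{i,(j+1) \bmod \pi_i}\}$ for all $i$ and $0\leqslant j\leqslant \pi_i-1$; $\delta(q_{i,j},b) = \{r_{i,j}\}$ and $\delta(r_{i,j},a)=\{q_{i,j+1}\}$ for $1 \leqslant j \leqslant \pi_i-2$; $\delta(q_{i,0},b) = \{\widehat{q}\}$; all other transitions are empty. *)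

theory Defs
  imports Main
begin

datatype sym = a | b

type_synonym lang = "sym list set"

definition conc :: "lang \<Rightarrow> lang \<Rightarrow> lang" (infixr "@@" 75) where
  "L @@ M = {u @ v | u v. u \<in> L \<and> v \<in> M}"

primrec lpow :: "lang \<Rightarrow> nat \<Rightarrow> lang" where
  "lpow L 0 = {[]}"
| "lpow L (Suc n) = L @@ lpow L n"

definition lstar :: "lang \<Rightarrow> lang" where
  "lstar L = (\<Union>n. lpow L n)"

definition beta :: "nat \<Rightarrow> lang" where
  "beta p = lstar ({[a]} @@ lpow ({[b], []} @@ {[a]}) (p - 2) @@ {[a]})"

(* alpha_{pi_1..pi_k} = (a (beta_pi_1 | ... | beta_pi_k) b)^*;
   the parameters are given as a list ps = [pi_1, ..., pi_k], indices 0..k-1 *)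
definition alpha :: "nat list \<Rightarrow> lang" where
  "alpha ps = lstar ({[a]} @@ (\<Union>i<length ps. beta (ps ! i)) @@ {[b]})"

datatype state = Qhat | Q nat nat | R nat nat

definition delta :: "nat list \<Rightarrow> state \<Rightarrow> sym \<Rightarrow> state \<Rightarrow> bool" where
  "delta ps q c q' \<longleftrightarrow>
     (q = Qhat \<and> c = a \<and> (\<exists>i<length ps. q' = Q i 0))
   \<or> (\<exists>i<length ps. \<exists>j<ps ! i. q = Q i j \<and> c = a \<and> q' = Q i (Suc j mod (ps ! i)))
   \<or> (\<exists>i<length ps. \<exists>j. 1 \<le> j \<and> j \<le> ps ! i - 2 \<and> q = Q i j \<and> c = b \<and> q' = R i j)
   \<or> (\<exists>i<length ps. \<exists>j. 1 \<le> j \<and> j \<le> ps ! i - 2 \<and> q = R i j \<and> c = a \<and> q' = Q i (Suc j))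
   \<or> (\<exists>i<length ps. q = Q i 0 \<and> c = b \<and> q' = Qhat)"

inductive run :: "nat list \<Rightarrow> state \<Rightarrow> sym list \<Rightarrow> state \<Rightarrow> bool" for ps where
  run_nil: "run ps q [] q"
| run_cons: "delta ps q c q' \<Longrightarrow> run ps q' w q'' \<Longrightarrow> run ps q (c # w) q''"

definition nfa_lang :: "nat list \<Rightarrow> lang" where
  "nfa_lang ps = {w. run ps Qhat w Qhat}"

end

theory Submission
  imports Defs
begin

lemma mem_conc: "w \<in> L @@ M \<longleftrightarrow> (\<exists>u v. w = u @ v \<and> u \<in> L \<and> v \<in> M)"
  by (auto simp: conc_def)

lemma concI: "x \<in> A \<Longrightarrow> y \<in> B \<Longrightarrow> x @ y \<in> A @@ B"
  by (auto simp: conc_def)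

lemma conc_assoc: "(A @@ B) @@ C = A @@ (B @@ C)"
  unfolding conc_def by (auto, metis append.assoc, metis append.assoc)

lemma single_conc: "{[c]} @@ M = (\<lambda>w. c # w) ` M"
  by (auto simp: conc_def)

lemma nil_conc: "{[]} @@ M = M"
  by (auto simp: conc_def)

lemma E_eq: "{[b], []} @@ {[a]} = {[b,a],[a]}"
  by (auto simp: conc_def)

lemma lstar_nil: "[] \<in> lstar X"
  unfolding lstar_def by (auto intro: exI[of _ 0])

lemma lstar_consI: "x \<in> X \<Longrightarrow> y \<in> lstar X \<Longrightarrow> x @ y \<in> lstar X"
  unfolding lstar_def proof -
  assume "x \<in> X" "y \<in> (\<Union>n. lpow X n)"
  then obtain n where "y \<in> lpow X n" by auto
  then have "x @ y \<in> lpow X (Suc n)" using \<open>x \<in> X\<close> by (auto intro: concI)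
  then show "x @ y \<in> (\<Union>n. lpow X n)" by blast
qed

lemma run_trans: "run ps q u q' \<Longrightarrow> run ps q' v q'' \<Longrightarrow> run ps q (u @ v) q''"
  by (induction rule: run.induct) (auto intro: run.intros)

lemma run_lpow: "(\<forall>x\<in>X. run ps q x q) \<Longrightarrow> w \<in> lpow X n \<Longrightarrow> run ps q w q"
proof (induction n arbitrary: w)
  case 0 then show ?case by (auto intro: run.intros)
next
  case (Suc n) then show ?case by (auto simp: mem_conc intro: run_trans)
qed

lemma run_lstar: "(\<forall>x\<in>X. run ps q x q) \<Longrightarrow> w \<in> lstar X \<Longrightarrow> run ps q w q"
  unfolding lstar_def using run_lpow by blast

lemma run1: "delta ps q c q' \<Longrightarrow> run ps q [c] q'"
  by (auto intro: run.intros)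

lemma cycle_run:
  assumes i: "i < length ps" and p: "ps ! i \<ge> 3"
  shows "\<forall>j w. j = ps ! i - 1 - n \<longrightarrow> 1 \<le> j \<longrightarrow> w \<in> lpow ({[b], []} @@ {[a]}) n @@ {[a]}
     \<longrightarrow> run ps (Q i j) w (Q i 0)"
proof (induction n)
  case 0
  show ?case
  proof (intro allI impI)
    fix j w assume j: "j = ps ! i - 1 - 0" and "1 \<le> j" and w: "w \<in> lpow ({[b], []} @@ {[a]}) 0 @@ {[a]}"
    have w': "w = [a]" using w by (simp add: nil_conc)
    have "delta ps (Q i j) a (Q i 0)"
      unfolding delta_def using i p j
      by (intro disjI2 disjI1) (rule exI[of _ i], auto intro!: exI[of _ j])
    then show "run ps (Q i j) w (Q i 0)" using w' by (simp add: run1)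
  qed
next
  case (Suc n)
  show ?case
  proof (intro allI impI)
    fix j w assume j: "j = ps ! i - 1 - Suc n" and j1: "1 \<le> j"
      and w: "w \<in> lpow ({[b], []} @@ {[a]}) (Suc n) @@ {[a]}"
    obtain x y where w': "w = x @ y" and x: "x \<in> {[b,a],[a]}"
      and y: "y \<in> lpow ({[b], []} @@ {[a]}) n @@ {[a]}"
      using w by (auto simp: conc_assoc mem_conc E_eq)
    have sj: "Suc j = ps ! i - 1 - n" using j j1 by simp
    have ry: "run ps (Q i (Suc j)) y (Q i 0)"
      using Suc.IH sj y by auto
    have jlt: "Suc j < ps ! i" using j j1 by auto
    have "run ps (Q i j) x (Q i (Suc j))"
    proof (cases "x = [a]")
      case True
      have "delta ps (Q i j) a (Q i (Suc j))"
        unfolding delta_def using i p jlt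
        by (intro disjI2 disjI1) (rule exI[of _ i], auto intro!: exI[of _ j])
      then show ?thesis using True by (simp add: run1)
    next
      case False
      then have xx: "x = [b,a]" using x by auto
      have d1: "delta ps (Q i j) b (R i j)"
        unfolding delta_def using i p jlt j1
        by (intro disjI2 disjI1) (rule exI[of _ i], auto intro!: exI[of _ j])
      have d2: "delta ps (R i j) a (Q i (Suc j))"
        unfolding delta_def using i p jlt j1
        by (intro disjI2 disjI1) (rule exI[of _ i], auto intro!: exI[of _ j])
      show ?thesis using xx d1 d2 by (auto intro: run.intros)
    qed
    then show "run ps (Q i j) w (Q i 0)" using ry w' run_trans by blast
  qed
qed

lemma beta_run:
  assumes i: "i < length ps" and p: "ps ! i \<ge> 3" and w: "w \<in> beta (ps ! i)"
  shows "run ps (Q i 0) w (Q i 0)"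
  using w unfolding beta_def
proof (rule run_lstar[rotated], intro ballI)
  fix x assume "x \<in> {[a]} @@ lpow ({[b], []} @@ {[a]}) (ps ! i - 2) @@ {[a]}"
  then obtain u where x: "x = a # u" and u: "u \<in> lpow ({[b], []} @@ {[a]}) (ps ! i - 2) @@ {[a]}"
    by (auto simp: single_conc)
  have "delta ps (Q i 0) a (Q i 1)"
    unfolding delta_def using i p
    by (intro disjI2 disjI1) (rule exI[of _ i], auto intro!: exI[of _ 0])
  moreover have "run ps (Q i 1) u (Q i 0)"
    using cycle_run[OF i p, of "ps ! i - 2"] u p by auto
  ultimately show "run ps (Q i 0) x (Q i 0)" using x by (auto intro: run.intros)
qed

lemma alpha_sub:
  assumes "\<forall>i<length ps. ps ! i \<ge> 3"
  shows "alpha ps \<subseteq> nfa_lang ps"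
proof
  fix w assume "w \<in> alpha ps"
  then have "run ps Qhat w Qhat" unfolding alpha_def
  proof (rule run_lstar[rotated], intro ballI)
    fix x assume "x \<in> {[a]} @@ (\<Union>i<length ps. beta (ps ! i)) @@ {[b]}"
    then obtain i u where x: "x = a # u @ [b]" and i: "i < length ps" and u: "u \<in> beta (ps ! i)"
      by (auto simp: single_conc mem_conc)
    have d1: "delta ps Qhat a (Q i 0)" unfolding delta_def using i by auto
    have d2: "delta ps (Q i 0) b Qhat" unfolding delta_def using i by auto
    have "run ps (Q i 0) u (Q i 0)" using beta_run[OF i _ u] assms i by auto
    then have "run ps (Q i 0) (u @ [b]) Qhat" using d2 run1 run_trans by blast
    then show "run ps Qhat x Qhat" using d1 x by (auto intro: run.intros)
  qed
  then show "w \<in> nfa_lang ps" by (simp add: nfa_lang_def)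
qed

definition E :: lang where "E = {[b], []} @@ {[a]}"

fun L :: "nat list \<Rightarrow> state \<Rightarrow> lang" where
  "L ps Qhat = alpha ps"
| "L ps (Q i j) = (if j = 0 then beta (ps ! i) @@ {[b]} @@ alpha ps
     else lpow E (ps ! i - 1 - j) @@ {[a]} @@ beta (ps ! i) @@ {[b]} @@ alpha ps)"
| "L ps (R i j) = {[a]} @@ (lpow E (ps ! i - 1 - Suc j) @@ {[a]} @@ beta (ps ! i) @@ {[b]} @@ alpha ps)"

lemma alpha_cons:
  assumes i: "i < length ps" and w: "w \<in> beta (ps ! i) @@ {[b]} @@ alpha ps"
  shows "a # w \<in> alpha ps"
proof -
  obtain u v where w': "w = u @ [b] @ v" and u: "u \<in> beta (ps ! i)" and v: "v \<in> alpha ps"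
    using w by (auto simp: mem_conc)
  have "a # u @ [b] \<in> {[a]} @@ (\<Union>i<length ps. beta (ps ! i)) @@ {[b]}"
    using i u by (auto simp: single_conc intro!: concI)
  then show ?thesis using v w' lstar_consI unfolding alpha_def
    by (metis append_Cons append_assoc)
qed

lemma L_sound:
  assumes p3: "\<forall>i<length ps. ps ! i \<ge> 3"
  shows "run ps q w q' \<Longrightarrow> q' = Qhat \<Longrightarrow> w \<in> L ps q"
proof (induction rule: run.induct)
  case (run_nil q)
  then show ?case by (simp add: alpha_def lstar_nil)
next
  case (run_cons q c q1 w q2)
  then have IH: "w \<in> L ps q1" by simp
  show ?case using run_cons(1) unfolding delta_def
  proof (elim disjE exE conjE)
    fix i assume "q = Qhat" "c = a" "i < length ps" "q1 = Q i 0"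
    then show ?thesis using IH alpha_cons by auto
  next
    fix i j assume i: "i < length ps" and j: "j < ps ! i" and q: "q = Q i j" and c: "c = a"
      and q1: "q1 = Q i (Suc j mod ps ! i)"
    have p: "ps ! i \<ge> 3" using p3 i by auto
    consider "j = 0" | "1 \<le> j" "Suc j < ps ! i" | "Suc j = ps ! i" using j by linarith
    then show ?thesis
    proof cases
      case 1
      then have q1': "q1 = Q i 1" using q1 p by simp
      obtain u0 v0 v1 where w0: "w = u0 @ [a] @ v0 @ [b] @ v1" and u0: "u0 \<in> lpow E (ps ! i - 2)"
        and v0: "v0 \<in> beta (ps ! i)" and v1: "v1 \<in> alpha ps"
        using IH q1' by (auto simp: mem_conc diff_diff_add numeral_2_eq_2)
      define u where "u = u0 @ [a]"
      define v where "v = v0 @ [b] @ v1"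
      have w: "w = u @ v" using w0 by (simp add: u_def v_def)
      have u: "u \<in> lpow E (ps ! i - 2) @@ {[a]}" unfolding u_def using u0 by (auto intro: concI)
      have v: "v \<in> beta (ps ! i) @@ {[b]} @@ alpha ps" unfolding v_def by (rule concI[OF v0 concI[OF _ v1]]) simp
      have "a # u \<in> {[a]} @@ lpow ({[b], []} @@ {[a]}) (ps ! i - 2) @@ {[a]}"
        using u by (auto simp: single_conc E_def)
      then have au: "(a # u) @ v0 \<in> beta (ps ! i)"
        using v0 unfolding beta_def by (rule lstar_consI)
      have "((a # u) @ v0) @ ([b] @ v1) \<in> beta (ps ! i) @@ {[b]} @@ alpha ps"
        by (rule concI[OF au concI[OF _ v1]]) simp
      then have "a # u @ v \<in> beta (ps ! i) @@ {[b]} @@ alpha ps"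
        by (simp add: v_def)
      then show ?thesis using w q c 1 by simp
    next
      case 2
      then have q1': "q1 = Q i (Suc j)" using q1 by simp
      have e: "ps ! i - 1 - j = Suc (ps ! i - 1 - Suc j)" using 2 by simp
      have "[a] \<in> E" by (simp add: E_def E_eq)
      moreover have "w \<in> lpow E (ps ! i - 1 - Suc j) @@ {[a]} @@ beta (ps ! i) @@ {[b]} @@ alpha ps"
        using IH q1' by simp
      ultimately have "[a] @ w \<in> E @@ (lpow E (ps ! i - 1 - Suc j) @@ {[a]} @@ beta (ps ! i) @@ {[b]} @@ alpha ps)"
        by (rule concI)
      then have "[a] @ w \<in> lpow E (ps ! i - 1 - j) @@ {[a]} @@ beta (ps ! i) @@ {[b]} @@ alpha ps"
        unfolding e by (simp add: conc_assoc)
      then show ?thesis using q c 2 by simp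
    next
      case 3
      then have q1': "q1 = Q i 0" using q1 by simp
      have "[a] @ w \<in> lpow E (ps ! i - 1 - j) @@ {[a]} @@ beta (ps ! i) @@ {[b]} @@ alpha ps"
        using IH q1' 3 by (simp add: nil_conc single_conc)
      moreover have "j \<noteq> 0" using 3 p by simp
      ultimately show ?thesis using q c by simp
    qed
  next
    fix i j assume i: "i < length ps" and j: "1 \<le> j" "j \<le> ps ! i - 2" and q: "q = Q i j" and c: "c = b"
      and q1: "q1 = R i j"
    obtain w' where w: "w = a # w'" and w': "w' \<in> lpow E (ps ! i - 1 - Suc j) @@ {[a]} @@ beta (ps ! i) @@ {[b]} @@ alpha ps"
      using IH q1 by (auto simp: single_conc)
    have p: "ps ! i \<ge> 3" using p3 i by auto
    have e: "ps ! i - 1 - j = Suc (ps ! i - 1 - Suc j)" using j p by simp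
    have "[b,a] \<in> E" by (simp add: E_def E_eq)
    then have "[b,a] @ w' \<in> E @@ (lpow E (ps ! i - 1 - Suc j) @@ {[a]} @@ beta (ps ! i) @@ {[b]} @@ alpha ps)"
      using w' by (rule concI)
    then have "[b,a] @ w' \<in> lpow E (ps ! i - 1 - j) @@ {[a]} @@ beta (ps ! i) @@ {[b]} @@ alpha ps"
      unfolding e by (simp add: conc_assoc)
    then show ?thesis using q c w j by simp
  next
    fix i j assume "i < length ps" "1 \<le> j" "j \<le> ps ! i - 2" "q = R i j" "c = a" "q1 = Q i (Suc j)"
    then show ?thesis using IH by (simp add: single_conc)
  next
    fix i assume "i < length ps" "q = Q i 0" "c = b" "q1 = Qhat"
    then show ?thesis using IH
      by (simp add: mem_conc) (metis append_Nil append_Cons lstar_nil beta_def)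
  qed
qed

theorem lemma5:
  fixes ps :: "nat list"
  assumes "length ps \<ge> 1"
    and "\<forall>i<length ps. ps ! i \<ge> 3"
    and "\<forall>i<length ps. \<forall>j<length ps. i \<noteq> j \<longrightarrow> coprime (ps ! i) (ps ! j)"
    and "ps ! 0 = 3"
  shows "nfa_lang ps = alpha ps"
proof
  show "alpha ps \<subseteq> nfa_lang ps" using alpha_sub assms(2) .
  show "nfa_lang ps \<subseteq> alpha ps"
  proof
    fix w assume "w \<in> nfa_lang ps"
    then have "run ps Qhat w Qhat" by (simp add: nfa_lang_def)
    then show "w \<in> alpha ps" using L_sound[OF assms(2), of Qhat w Qhat] by simp
  qed
qed

end
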